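(* Fix parameters $\mathfrak h=(h,\varepsilon,\theta)$. Let $w_h,v_h\in\mathbb V_h$ satisfy $$-\Delta^\diamond_{\infty,\mathfrak h}w_h(z)\le-\Delta^\diamond_{\infty,\mathfrak h}v_h(z)\qquad\forall z\in\mathcal N_h^I,\qquad(\ast)$$ and suppose that one of the following holds: (1) for every $z\in\mathcal N_h^I$, $(\ast)$ holds with strict inequality at $z$ or $-\Delta^\diamond_{\infty,\mathfrak h}w_h(z)<0$; (2) for every $z\in\mathcal N_h^I$, $(\ast)$ holds with strict inequality at $z$ or $-\Delta^\diamond_{\infty,\mathfrak h}v_h(z)>0$. Then $$\max_{z\in\mathcal N_h}\big[w_h(z)-v_h(z)\big]=\max_{z\in\mathcal N_h^b}\big[w_h(z)-v_h(z)\big].$$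
   Context: Setting: $\Omega\subset\mathbb R^d$ ($d\ge1$) is a bounded domain with continuous boundary. For $r>0$, $\Omega^{(r)}=\{x\in\Omega:\operatorname{dist}(x,\partial\Omega)>r\}$. $\mathcal T_h$ is a mesh of closed simplices, $h=\max_T\operatorname{diam}T$, $\Omega_h$ the interior of the union of the simplices, with $\Omega^{(h)}\subset\Omega_h\subset\Omega$; $\mathcal N_h$ is the set of vertices. $\mathbb V_h$ is the space of continuous piecewise linear functions on $\mathcal T_h$ and $\mathcal I_h$ is the Lagrange interpolant. Parameters $\mathfrak h=(h,\varepsilon,\theta)$ with $\varepsilon\in[h,\operatorname{diam}\Omega]$, $0<\theta\le1$. Interior nodes $\mathcal N_h^I=\mathcal N_h\cap\Omega^{(2\varepsilon)}$; boundary nodes $\mathcal N_h^b=\mathcal N_h\setminus\mathcal N_h^I$. $\mathbb S_\theta$ is a finite symmetric subset of the unit sphere $\mathbb S$ such that each $v\in\mathbb S$ has $v_\theta\in\mathbb S_\theta$ with $|v-v_\theta|\le\theta$. For $z\in\mathcal N_h^I$, $\mathcal N_{\mathfrak h}(z)=\{z\}\cup\{z+\varepsilon v_\theta:v_\theta\in\mathbb S_\theta\}$, $S^+_{\mathfrak h}w(z)=\varepsilon^{-1}(\max_{x\in\mathcal N_{\mathfrak h}(z)}w(x)-w(z))$, $S^-_{\mathfrak h}w(z)=\varepsilon^{-1}(w(z)-\min_{x\in\mathcal N_{\mathfrak h}(z)}w(x))$, and $-\Delta^\diamond_{\infty,\mathfrak h}w(z)=-\varepsilon^{-1}(S^+_{\mathfrak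 h}\mathcal I_hw(z)-S^-_{\mathfrak h}\mathcal I_hw(z))$ for $w\in C(\overline\Omega)$. *)

theory Defs
  imports "HOL-Analysis.Analysis"
begin

definition continuous_boundary :: "'a::euclidean_space set \<Rightarrow> bool" where
  "continuous_boundary \<Omega> \<longleftrightarrow>
     (\<forall>x\<in>frontier \<Omega>. \<exists>r>0. \<exists>e. norm e = 1 \<and>
        (\<exists>g. continuous_on {y. y \<bullet> e = 0} g \<and>
             ball x r \<inter> \<Omega> = {y\<in>ball x r. y \<bullet> e > g (y - (y \<bullet> e) *\<^sub>R e)}))"

definition domain_cb :: "'a::euclidean_space set \<Rightarrow> bool" where
  "domain_cb \<Omega> \<longleftrightarrow> open \<Omega> \<and> connected \<Omega> \<and> \<Omega> \<noteq> {} \<and> bounded \<Omega> \<and> continuous_boundary \<Omega>"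

definition inner_set :: "'a::euclidean_space set \<Rightarrow> real \<Rightarrow> 'a set" where
  "inner_set \<Omega> r = {x\<in>\<Omega>. infdist x (frontier \<Omega>) > r}"

text \<open>A mesh: a finite nonempty family of (closed) d-simplices, each given by its set of
d+1 affinely independent vertices; conforming (two simplices meet in a common face).\<close>
definition mesh :: "'a::euclidean_space set set \<Rightarrow> bool" where
  "mesh T \<longleftrightarrow> finite T \<and> T \<noteq> {} \<and>
     (\<forall>S\<in>T. finite S \<and> card S = DIM('a) + 1 \<and> \<not> affine_dependent S) \<and>
     (\<forall>S1\<in>T. \<forall>S2\<in>T. convex hull S1 \<inter> convex hull S2 = convex hull (S1 \<inter> S2))"

definition mesh_size :: "'a::euclidean_space set set \<Rightarrow> real" where
  "mesh_size T = Max ((\<lambda>S. diameter (convex hull S)) ` T)"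

definition mesh_nodes :: "'a::euclidean_space set set \<Rightarrow> 'a set" where
  "mesh_nodes T = \<Union>T"

definition mesh_union :: "'a::euclidean_space set set \<Rightarrow> 'a set" where
  "mesh_union T = (\<Union>S\<in>T. convex hull S)"

definition mesh_domain :: "'a::euclidean_space set set \<Rightarrow> 'a set" where
  "mesh_domain T = interior (mesh_union T)"

definition lagrange_interp :: "'a::euclidean_space set set \<Rightarrow> ('a \<Rightarrow> real) \<Rightarrow> 'a \<Rightarrow> real" where
  "lagrange_interp T w x =
     (THE y. \<exists>S\<in>T. \<exists>l. (\<forall>v\<in>S. 0 \<le> l v) \<and> sum l S = 1 \<and> (\<Sum>v\<in>S. l v *\<^sub>R v) = x
                      \<and> y = (\<Sum>v\<in>S. l v * w v))"

text \<open>V_h: continuous piecewise linear functions on the mesh (they coincide with their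
Lagrange interpolant on the meshed region).\<close>
definition Vh :: "'a::euclidean_space set set \<Rightarrow> ('a \<Rightarrow> real) set" where
  "Vh T = {w. \<forall>x\<in>mesh_union T. w x = lagrange_interp T w x}"

definition interior_nodes :: "'a::euclidean_space set \<Rightarrow> 'a set set \<Rightarrow> real \<Rightarrow> 'a set" where
  "interior_nodes \<Omega> T \<epsilon> = mesh_nodes T \<inter> inner_set \<Omega> (2 * \<epsilon>)"

definition boundary_nodes :: "'a::euclidean_space set \<Rightarrow> 'a set set \<Rightarrow> real \<Rightarrow> 'a set" where
  "boundary_nodes \<Omega> T \<epsilon> = mesh_nodes T - interior_nodes \<Omega> T \<epsilon>"

definition direction_set :: "real \<Rightarrow> 'a::euclidean_space set \<Rightarrow> bool" where
  "direction_set \<theta> S \<longleftrightarrow> finite S \<and> S \<subseteq> sphere 0 1 \<and> (\<forall>v\<in>S. - v \<in> S) \<and>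
     (\<forall>v\<in>sphere 0 1. \<exists>u\<in>S. norm (v - u) \<le> \<theta>)"

definition stencil :: "real \<Rightarrow> 'a::euclidean_space set \<Rightarrow> 'a \<Rightarrow> 'a set" where
  "stencil \<epsilon> S z = insert z ((\<lambda>v. z + \<epsilon> *\<^sub>R v) ` S)"

definition S_plus :: "'a::euclidean_space set set \<Rightarrow> real \<Rightarrow> 'a set \<Rightarrow> ('a \<Rightarrow> real) \<Rightarrow> 'a \<Rightarrow> real" where
  "S_plus T \<epsilon> S w z = (Max (w ` stencil \<epsilon> S z) - w z) / \<epsilon>"

definition S_minus :: "'a::euclidean_space set set \<Rightarrow> real \<Rightarrow> 'a set \<Rightarrow> ('a \<Rightarrow> real) \<Rightarrow> 'a \<Rightarrow> real" where
  "S_minus T \<epsilon> S w z = (w z - Min (w ` stencil \<epsilon> S z)) / \<epsilon>"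

definition neg_inf_lap :: "'a::euclidean_space set set \<Rightarrow> real \<Rightarrow> 'a set \<Rightarrow> ('a \<Rightarrow> real) \<Rightarrow> 'a \<Rightarrow> real" where
  "neg_inf_lap T \<epsilon> S w z =
     - (S_plus T \<epsilon> S (lagrange_interp T w) z - S_minus T \<epsilon> S (lagrange_interp T w) z) / \<epsilon>"

end

theory Submission
  imports Defs
begin


definition Lp :: "real \<Rightarrow> ('a \<Rightarrow> 'a set) \<Rightarrow> ('a \<Rightarrow> real) \<Rightarrow> 'a \<Rightarrow> real" where
  "Lp e st U z = - ((Max (U ` st z) - U z) / e - (U z - Min (U ` st z)) / e) / e"

lemma core:
  fixes W V :: "'a \<Rightarrow> real"
  assumes fin: "finite N" and ne: "N \<noteq> {}" and sub: "NI \<subseteq> N" and e0: "e \<ge> 0"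
    and st: "\<forall>z\<in>NI. finite (st z) \<and> z \<in> st z"
    and rep: "\<forall>z\<in>NI. \<forall>x\<in>st z. \<exists>F l. finite F \<and> F \<subseteq> N \<and> (\<forall>y\<in>F. 0 \<le> l y) \<and> sum l F = 1
                 \<and> W x = (\<Sum>y\<in>F. l y * W y) \<and> V x = (\<Sum>y\<in>F. l y * V y)"
    and star: "\<forall>z\<in>NI. Lp e st W z \<le> Lp e st V z"
    and c1: "\<forall>z\<in>NI. Lp e st W z < Lp e st V z \<or> Lp e st W z < 0"
  shows "\<exists>y\<in>N-NI. \<forall>x\<in>N. W x - V x \<le> W y - V y"
proof -
  define D where "D x = W x - V x" for x
  define M where "M = Max (D ` N)"
  have DM: "D x \<le> M" if "x \<in> N" for x using fin that unfolding M_def by auto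
  define A where "A = {z\<in>N. D z = M}"
  have Afin: "finite A" using fin A_def by auto
  have "M \<in> D ` N" unfolding M_def using fin ne by (intro Max_in) auto
  hence Ane: "A \<noteq> {}" unfolding A_def by auto
  show ?thesis
  proof (cases "A \<subseteq> NI")
    case False
    then obtain y where "y \<in> A" "y \<notin> NI" by auto
    hence "y \<in> N - NI" "D y = M" unfolding A_def by auto
    moreover have "\<forall>x\<in>N. W x - V x \<le> W y - V y" using DM \<open>D y = M\<close> unfolding D_def by auto
    ultimately show ?thesis by blast
  next
    case True
    obtain z where zA: "z \<in> A" and zmax: "\<forall>y\<in>A. W y \<le> W z"
    proof -
      have "Max (W ` A) \<in> W ` A" using Afin Ane by (intro Max_in) auto
      then obtain z where "z \<in> A" "W z = Max (W ` A)" by auto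
      moreover have "\<forall>y\<in>A. W y \<le> Max (W ` A)" using Afin by auto
      ultimately show ?thesis using that by auto
    qed
    have zNI: "z \<in> NI" using True zA by auto
    have zN: "z \<in> N" and Dz: "D z = M" using zA A_def by auto
    have sf: "finite (st z)" and zs: "z \<in> st z" using st zNI by auto
    have Dle: "D x \<le> M" if xst: "x \<in> st z" for x
    proof -
      obtain F l where F: "finite F" "F \<subseteq> N" "\<forall>y\<in>F. 0 \<le> l y" "sum l F = 1"
        "W x = (\<Sum>y\<in>F. l y * W y)" "V x = (\<Sum>y\<in>F. l y * V y)"
        using bspec[OF bspec[OF rep zNI] xst] by blast
      have "D x = (\<Sum>y\<in>F. l y * D y)" using F(5,6) unfolding D_def
        by (simp add: sum_subtractf right_diff_distrib)
      also have "\<dots> \<le> (\<Sum>y\<in>F. l y * M)"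
        using F DM by (intro sum_mono mult_left_mono) auto
      also have "\<dots> = M" using F(4) by (simp add: sum_distrib_right[symmetric])
      finally show ?thesis .
    qed
    have diff: "W x - W z \<le> V x - V z" if "x \<in> st z" for x
      using Dle[OF that] Dz unfolding D_def by linarith
    define a where "a = Max (W ` st z) - W z"
    define b where "b = W z - Min (W ` st z)"
    define c where "c = Max (V ` st z) - V z"
    define d where "d = V z - Min (V ` st z)"
    obtain xw where xw: "xw \<in> st z" "W xw = Max (W ` st z)"
    proof -
      have "Max (W ` st z) \<in> W ` st z" using sf zs by (intro Max_in) auto
      thus ?thesis using that by auto
    qed
    obtain xv where xv: "xv \<in> st z" "V xv = Min (V ` st z)"
    proof -
      have "Min (V ` st z) \<in> V ` st z" using sf zs by (intro Min_in) auto
      thus ?thesis using that by auto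
    qed
    have Vxw: "V xw \<le> Max (V ` st z)" using sf xw by auto
    hence ac: "a \<le> c" using diff[OF xw(1)] xw unfolding a_def c_def by linarith
    have "Min (W ` st z) \<le> W xv" using sf xv by auto
    hence bd: "d \<le> b" using diff[OF xv(1)] xv unfolding b_def d_def by linarith
    have b0: "0 \<le> b" using sf zs unfolding b_def by auto
    have LW: "Lp e st W z = - (a/e - b/e)/e" unfolding Lp_def a_def b_def by simp
    have LV: "Lp e st V z = - (c/e - d/e)/e" unfolding Lp_def c_def d_def by simp
    have epos: "e > 0"
    proof (rule ccontr)
      assume "\<not> e > 0" hence "e = 0" using e0 by auto
      thus False using c1 zNI LW LV by auto
    qed
    have "(a + d) * (e*e) \<le> (b + c) * (e*e)" using ac bd epos by (intro mult_right_mono) auto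
    hence "a * (e*e) + d * (e*e) \<le> b * (e*e) + c * (e*e)" by (simp add: distrib_right)
    hence "Lp e st V z \<le> Lp e st W z" unfolding LW LV using epos
      by (simp add: field_simps)
    hence eq: "Lp e st W z = Lp e st V z" using star zNI by auto
    hence neg: "Lp e st W z < 0" using c1 zNI by auto
    have "a - b > 0"
    proof -
      have "- (a/e - b/e)/e = -((a-b)/(e*e))" using epos by (simp add: field_simps)
      hence "(a - b)/(e*e) > 0" using neg LW by linarith
      thus ?thesis using epos by (simp add: zero_less_divide_iff)
    qed
    have "(a - b) = (c - d)"
    proof -
      have h1: "(- (a/e - b/e))/e = (- (c/e - d/e))/e" using eq by (simp only: LW LV)
      hence "- (a/e - b/e) = - (c/e - d/e)" using epos by (metis divide_cancel_right less_irrefl)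
      hence "a/e - b/e = c/e - d/e" by linarith
      hence "(a-b)/e = (c-d)/e" by (simp add: diff_divide_distrib)
      thus ?thesis using epos by (metis divide_cancel_right less_irrefl)
    qed
    hence "a = c" using ac bd by linarith
    have Wxw: "W xw > W z" using \<open>a - b > 0\<close> b0 xw unfolding a_def by linarith
    have "V xw - V z \<le> c" using Vxw unfolding c_def by linarith
    hence "D xw \<ge> D z" using \<open>a = c\<close> xw unfolding a_def D_def by linarith
    hence DxwM: "D xw = M" using Dle[OF xw(1)] Dz by linarith
    obtain F l where F: "finite F" "F \<subseteq> N" "\<forall>y\<in>F. 0 \<le> l y" "sum l F = 1"
        "W xw = (\<Sum>y\<in>F. l y * W y)" "V xw = (\<Sum>y\<in>F. l y * V y)"
        using bspec[OF bspec[OF rep zNI] xw(1)] by blast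
    have DF: "D xw = (\<Sum>y\<in>F. l y * D y)" using F(5,6) unfolding D_def
      by (simp add: sum_subtractf right_diff_distrib)
    have "(\<Sum>y\<in>F. l y * (M - D y)) = (\<Sum>y\<in>F. l y * M) - (\<Sum>y\<in>F. l y * D y)"
      by (simp add: sum_subtractf right_diff_distrib)
    also have "\<dots> = 0" using F(4) DF DxwM by (simp add: sum_distrib_right[symmetric])
    finally have s0: "(\<Sum>y\<in>F. l y * (M - D y)) = 0" .
    have nn: "\<forall>y\<in>F. 0 \<le> l y * (M - D y)"
    proof
      fix y assume y: "y \<in> F"
      hence "y \<in> N" using F(2) by blast
      hence "D y \<le> M" by (rule DM)
      moreover have "0 \<le> l y" using F(3) y by blast
      ultimately show "0 \<le> l y * (M - D y)" by simp
    qed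
    have all0: "\<forall>x\<in>F. l x * (M - D x) = 0"
      using sum_nonneg_eq_0_iff[OF F(1), of "\<lambda>y. l y * (M - D y)"] nn s0 by simp
    have allM: "\<forall>y\<in>F. l y > 0 \<longrightarrow> D y = M"
    proof (intro ballI impI)
      fix y assume y: "y \<in> F" "l y > 0"
      have "l y * (M - D y) = 0"  using all0 y(1) by blast
      thus "D y = M" using y by simp
    qed
    have "\<exists>y\<in>F. l y > 0 \<and> W y > W z"
    proof (rule ccontr)
      assume nt: "\<not> ?thesis"
      have "\<forall>y\<in>F. l y * W y \<le> l y * W z"
      proof
        fix y assume y: "y \<in> F"
        have ly: "0 \<le> l y" using F(3) y by blast
        show "l y * W y \<le> l y * W z"
        proof (cases "l y = 0")
          case False
          hence "l y > 0" using ly by linarith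
          hence "W y \<le> W z" using nt y by force
          thus ?thesis using ly by (rule mult_left_mono)
        qed simp
      qed
      hence "(\<Sum>y\<in>F. l y * W y) \<le> (\<Sum>y\<in>F. l y * W z)" by (intro sum_mono) blast
      also have "\<dots> = W z" using F(4) by (simp add: sum_distrib_right[symmetric])
      finally show False using F(5) Wxw by linarith
    qed
    then obtain y where y: "y \<in> F" "l y > 0" "W y > W z" by blast
    have "y \<in> A" using allM y F(2) unfolding A_def by auto
    thus ?thesis using zmax y by force
  qed
qed



lemma Lp_neg:
  assumes "finite (st z)" "st z \<noteq> {}"
  shows "Lp e st (\<lambda>x. - U x) z = - Lp e st U z"
proof -
  have mx: "Max ((\<lambda>x. - U x) ` st z) = - Min (U ` st z)"
  proof (rule Max_eqI)
    show "finite ((\<lambda>x. - U x) ` st z)" using assms by simp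
    show "y \<le> - Min (U ` st z)" if "y \<in> (\<lambda>x. - U x) ` st z" for y
      using that assms by auto
    have "Min (U ` st z) \<in> U ` st z" using assms by (intro Min_in) auto
    thus "- Min (U ` st z) \<in> (\<lambda>x. - U x) ` st z" by auto
  qed
  have mn: "Min ((\<lambda>x. - U x) ` st z) = - Max (U ` st z)"
  proof (rule Min_eqI)
    show "finite ((\<lambda>x. - U x) ` st z)" using assms by simp
    show "y \<ge> - Max (U ` st z)" if "y \<in> (\<lambda>x. - U x) ` st z" for y
      using that assms by auto
    have "Max (U ` st z) \<in> U ` st z" using assms by (intro Max_in) auto
    thus "- Max (U ` st z) \<in> (\<lambda>x. - U x) ` st z" by auto
  qed
  show ?thesis unfolding Lp_def mx mn by (cases "e = 0") (simp_all add: field_simps)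
qed

lemma bary_unique:
  fixes S :: "'a::euclidean_space set"
  assumes "finite S" "\<not> affine_dependent S" "sum l S = 1" "sum l' S = 1"
    "(\<Sum>v\<in>S. l v *\<^sub>R v) = (\<Sum>v\<in>S. l' v *\<^sub>R v)" "v \<in> S"
  shows "l v = l' v"
proof (rule ccontr)
  assume ne: "l v \<noteq> l' v"
  define U where "U x = l x - l' x" for x
  have "sum U S = 0" using assms(3,4) unfolding U_def by (simp add: sum_subtractf)
  moreover have "(\<Sum>x\<in>S. U x *\<^sub>R x) = 0" using assms(5) unfolding U_def
    by (simp add: scaleR_diff_left sum_subtractf)
  moreover have "U v \<noteq> 0" using ne unfolding U_def by simp
  ultimately have "affine_dependent S" using assms(1,6)
    by (subst affine_dependent_explicit_finite[OF assms(1)]) blast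
  thus False using assms(2) by blast
qed

lemma sub_rep:
  fixes S :: "'a::euclidean_space set"
  assumes "finite S" "\<not> affine_dependent S" "sum l S = 1" "(\<Sum>v\<in>S. l v *\<^sub>R v) = x"
    "C \<subseteq> S" "sum m C = 1" "(\<Sum>v\<in>C. m v *\<^sub>R v) = x"
  shows "(\<Sum>v\<in>S. l v * w v) = (\<Sum>v\<in>C. m v * w v)"
proof -
  define m' where "m' v = (if v \<in> C then m v else 0)" for v
  have e1: "sum m' S = sum m' C" using assms(1,5)
    by (intro sum.mono_neutral_right) (auto simp: m'_def)
  have e2: "(\<Sum>v\<in>S. m' v *\<^sub>R v) = (\<Sum>v\<in>C. m' v *\<^sub>R v)" using assms(1,5)
    by (intro sum.mono_neutral_right) (auto simp: m'_def)
  have e3: "(\<Sum>v\<in>S. m' v * w v) = (\<Sum>v\<in>C. m' v * w v)" using assms(1,5)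
    by (intro sum.mono_neutral_right) (auto simp: m'_def)
  have c1: "sum m' C = sum m C" by (intro sum.cong) (auto simp: m'_def)
  have c2: "(\<Sum>v\<in>C. m' v *\<^sub>R v) = (\<Sum>v\<in>C. m v *\<^sub>R v)" by (intro sum.cong) (auto simp: m'_def)
  have c3: "(\<Sum>v\<in>C. m' v * w v) = (\<Sum>v\<in>C. m v * w v)" by (intro sum.cong) (auto simp: m'_def)
  have eq: "l v = m' v" if "v \<in> S" for v
    using bary_unique[OF assms(1,2,3), of m' v] e1 c1 e2 c2 assms(6,7,4) that by simp
  have "(\<Sum>v\<in>S. l v * w v) = (\<Sum>v\<in>S. m' v * w v)" using eq by (intro sum.cong) auto
  thus ?thesis using e3 c3 by simp
qed

lemma interp_eq:
  fixes T :: "'a::euclidean_space set set"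
  assumes mesh: "mesh T" and S: "S \<in> T" "\<forall>v\<in>S. 0 \<le> l v" "sum l S = 1" "(\<Sum>v\<in>S. l v *\<^sub>R v) = x"
  shows "lagrange_interp T w x = (\<Sum>v\<in>S. l v * w v)"
  unfolding lagrange_interp_def
proof (rule the_equality)
  show "\<exists>S'\<in>T. \<exists>l'. (\<forall>v\<in>S'. 0 \<le> l' v) \<and> sum l' S' = 1 \<and> (\<Sum>v\<in>S'. l' v *\<^sub>R v) = x
                      \<and> (\<Sum>v\<in>S. l v * w v) = (\<Sum>v\<in>S'. l' v * w v)"
    using S by blast
next
  fix y assume "\<exists>S'\<in>T. \<exists>l'. (\<forall>v\<in>S'. 0 \<le> l' v) \<and> sum l' S' = 1 \<and> (\<Sum>v\<in>S'. l' v *\<^sub>R v) = x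
                      \<and> y = (\<Sum>v\<in>S'. l' v * w v)"
  then obtain S' l' where S': "S' \<in> T" "\<forall>v\<in>S'. 0 \<le> l' v" "sum l' S' = 1"
    "(\<Sum>v\<in>S'. l' v *\<^sub>R v) = x" "y = (\<Sum>v\<in>S'. l' v * w v)" by blast
  have fS: "finite S" "\<not> affine_dependent S" using mesh S(1) unfolding mesh_def by auto
  have fS': "finite S'" "\<not> affine_dependent S'" using mesh S'(1) unfolding mesh_def by auto
  have hull: "convex hull S \<inter> convex hull S' = convex hull (S \<inter> S')"
    using mesh S(1) S'(1) unfolding mesh_def by blast
  have "x \<in> convex hull S" using S fS unfolding convex_hull_finite[OF fS(1)] by blast
  moreover have "x \<in> convex hull S'" using S' fS' unfolding convex_hull_finite[OF fS'(1)] by blast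
  ultimately have "x \<in> convex hull (S \<inter> S')" using hull by blast
  moreover have fI: "finite (S \<inter> S')" using fS by simp
  ultimately obtain m where m: "\<forall>v\<in>S \<inter> S'. 0 \<le> m v" "sum m (S \<inter> S') = 1"
    "(\<Sum>v\<in>S \<inter> S'. m v *\<^sub>R v) = x"
    unfolding convex_hull_finite[OF fI] by blast
  have "(\<Sum>v\<in>S. l v * w v) = (\<Sum>v\<in>S \<inter> S'. m v * w v)"
    by (rule sub_rep[OF fS S(3,4) _ m(2,3)]) auto
  moreover have "(\<Sum>v\<in>S'. l' v * w v) = (\<Sum>v\<in>S \<inter> S'. m v * w v)"
    by (rule sub_rep[OF fS' S'(3,4) _ m(2,3)]) auto
  ultimately show "y = (\<Sum>v\<in>S. l v * w v)" using S'(5) by simp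
qed

lemma stencil_in:
  fixes \<Omega> :: "'a::euclidean_space set"
  assumes op: "open \<Omega>" and inner: "inner_set \<Omega> h \<subseteq> mesh_domain T"
    and he: "h \<le> \<epsilon>" "0 \<le> \<epsilon>" and z: "z \<in> \<Omega>" "infdist z (frontier \<Omega>) > 2 * \<epsilon>"
    and u: "norm u = 1"
  shows "z + \<epsilon> *\<^sub>R u \<in> mesh_union T"
proof -
  define x where "x = z + \<epsilon> *\<^sub>R u"
  have dzx: "dist z x = \<epsilon>" unfolding x_def dist_norm using u he by simp
  have xO: "x \<in> \<Omega>"
  proof (rule ccontr)
    assume nx: "x \<notin> \<Omega>"
    have "closed_segment z x \<inter> \<Omega> \<noteq> {}" using z by auto
    moreover have "closed_segment z x - \<Omega> \<noteq> {}" using nx by auto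
    ultimately have "closed_segment z x \<inter> frontier \<Omega> \<noteq> {}"
      by (intro connected_Int_frontier) auto
    then obtain p where p: "p \<in> closed_segment z x" "p \<in> frontier \<Omega>" by blast
    have "dist p z \<le> dist z x" using dist_in_closed_segment[OF p(1)] by blast
    hence "infdist z (frontier \<Omega>) \<le> \<epsilon>" using infdist_le[OF p(2), of z] dzx
      by (simp add: dist_commute)
    thus False using z he by linarith
  qed
  have "infdist z (frontier \<Omega>) \<le> infdist x (frontier \<Omega>) + dist z x" by (rule infdist_triangle)
  hence "infdist x (frontier \<Omega>) > h" using dzx z he by linarith
  hence "x \<in> inner_set \<Omega> h" using xO unfolding inner_set_def by blast
  hence "x \<in> interior (mesh_union T)" using inner unfolding mesh_domain_def by blast
  thus ?thesis using interior_subset x_def by blast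
qed



theorem theorem3p2:
  fixes \<Omega> :: "'a::euclidean_space set" and T :: "'a set set"
    and h \<epsilon> \<theta> :: real and S\<theta> :: "'a set" and w v :: "'a \<Rightarrow> real"
  assumes dom: "domain_cb \<Omega>"
    and mesh: "mesh T"
    and h: "h = mesh_size T"
    and inner: "inner_set \<Omega> h \<subseteq> mesh_domain T" "mesh_domain T \<subseteq> \<Omega>"
    and eps: "h \<le> \<epsilon>" "\<epsilon> \<le> diameter \<Omega>"
    and theta: "0 < \<theta>" "\<theta> \<le> 1"
    and dirs: "direction_set \<theta> S\<theta>"
    and wV: "w \<in> Vh T" and vV: "v \<in> Vh T"
    and star: "\<forall>z\<in>interior_nodes \<Omega> T \<epsilon>. neg_inf_lap T \<epsilon> S\<theta> w z \<le> neg_inf_lap T \<epsilon> S\<theta> v z"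
    and cases: "(\<forall>z\<in>interior_nodes \<Omega> T \<epsilon>.
                   neg_inf_lap T \<epsilon> S\<theta> w z < neg_inf_lap T \<epsilon> S\<theta> v z \<or> neg_inf_lap T \<epsilon> S\<theta> w z < 0)
              \<or> (\<forall>z\<in>interior_nodes \<Omega> T \<epsilon>.
                   neg_inf_lap T \<epsilon> S\<theta> w z < neg_inf_lap T \<epsilon> S\<theta> v z \<or> neg_inf_lap T \<epsilon> S\<theta> v z > 0)"
  shows "Max ((\<lambda>z. w z - v z) ` mesh_nodes T) = Max ((\<lambda>z. w z - v z) ` boundary_nodes \<Omega> T \<epsilon>)"
proof -
  define N where "N = mesh_nodes T"
  define NI where "NI = interior_nodes \<Omega> T \<epsilon>"
  define st where "st = stencil \<epsilon> S\<theta>"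
  define W where "W = lagrange_interp T w"
  define V where "V = lagrange_interp T v"
  have Tfin: "finite T" "T \<noteq> {}" and Sfin: "\<forall>S\<in>T. finite S \<and> card S = DIM('a) + 1"
    using mesh unfolding mesh_def by auto
  have finN: "finite N" unfolding N_def mesh_nodes_def using Tfin Sfin by auto
  obtain S0 where S0: "S0 \<in> T" using Tfin by blast
  have "card S0 \<noteq> 0" using Sfin S0 by simp
  hence "S0 \<noteq> {}" by auto
  hence neN: "N \<noteq> {}" using S0 unfolding N_def mesh_nodes_def by auto
  have subN: "NI \<subseteq> N" unfolding NI_def N_def interior_nodes_def by auto
  have h0: "0 \<le> h"
  proof -
    have "bounded (convex hull S0)" using Sfin S0
      by (intro compact_imp_bounded finite_imp_compact_convex_hull) auto
    hence "0 \<le> diameter (convex hull S0)" by (rule diameter_ge_0)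
    also have "\<dots> \<le> mesh_size T" unfolding mesh_size_def using Tfin S0 by (intro Max_ge) auto
    finally show ?thesis using h by simp
  qed
  have e0: "0 \<le> \<epsilon>" using h0 eps by linarith
  have dfin: "finite S\<theta>" and dsph: "S\<theta> \<subseteq> sphere 0 1" using dirs unfolding direction_set_def by auto
  have stz: "\<forall>z\<in>NI. finite (st z) \<and> z \<in> st z" unfolding st_def stencil_def using dfin by auto
  have opn: "open \<Omega>" using dom unfolding domain_cb_def by auto
  have NU: "x \<in> mesh_union T" if xN: "x \<in> N" for x
  proof -
    obtain S where S: "S \<in> T" "x \<in> S" using xN unfolding N_def mesh_nodes_def by auto
    have "x \<in> convex hull S" using S(2) by (rule hull_inc)
    thus ?thesis unfolding mesh_union_def using S(1) by blast
  qed
  have wV': "\<forall>x\<in>mesh_union T. w x = lagrange_interp T w x" using wV unfolding Vh_def by simp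
  have vV': "\<forall>x\<in>mesh_union T. v x = lagrange_interp T v x" using vV unfolding Vh_def by simp
  have WN: "W x = w x" "V x = v x" if xN: "x \<in> N" for x
    using NU[OF xN] wV' vV' unfolding W_def V_def by simp_all
  have stU: "x \<in> mesh_union T" if z: "z \<in> NI" and x: "x \<in> st z" for z x
  proof -
    have zN: "z \<in> N" using z subN by auto
    have zO: "z \<in> \<Omega>" "infdist z (frontier \<Omega>) > 2 * \<epsilon>"
      using z unfolding NI_def interior_nodes_def inner_set_def by auto
    show ?thesis
    proof (cases "x = z")
      case True thus ?thesis using NU zN by simp
    next
      case False
      then obtain u where u: "u \<in> S\<theta>" "x = z + \<epsilon> *\<^sub>R u" using x unfolding st_def stencil_def by auto
      have "norm u = 1" using u dsph by auto
      thus ?thesis using stencil_in[OF opn inner(1) eps(1) e0 zO] u by simp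
    qed
  qed
  have rep: "\<forall>z\<in>NI. \<forall>x\<in>st z. \<exists>F l. finite F \<and> F \<subseteq> N \<and> (\<forall>y\<in>F. 0 \<le> l y) \<and> sum l F = 1
                 \<and> W x = (\<Sum>y\<in>F. l y * W y) \<and> V x = (\<Sum>y\<in>F. l y * V y)"
  proof (intro ballI)
    fix z x assume z: "z \<in> NI" and x: "x \<in> st z"
    have "x \<in> mesh_union T" by (rule stU[OF z x])
    then obtain S where S: "S \<in> T" "x \<in> convex hull S" unfolding mesh_union_def by auto
    have fS: "finite S" using Sfin S by auto
    obtain l where l: "\<forall>v\<in>S. 0 \<le> l v" "sum l S = 1" "(\<Sum>v\<in>S. l v *\<^sub>R v) = x"
      using S(2) unfolding convex_hull_finite[OF fS] by blast
    have SN: "S \<subseteq> N" using S unfolding N_def mesh_nodes_def by auto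
    have "W x = (\<Sum>y\<in>S. l y * w y)" unfolding W_def by (rule interp_eq[OF mesh S(1) l])
    also have "\<dots> = (\<Sum>y\<in>S. l y * W y)" using WN SN by (intro sum.cong) auto
    finally have Wx: "W x = (\<Sum>y\<in>S. l y * W y)" .
    have "V x = (\<Sum>y\<in>S. l y * v y)" unfolding V_def by (rule interp_eq[OF mesh S(1) l])
    also have "\<dots> = (\<Sum>y\<in>S. l y * V y)" using WN SN by (intro sum.cong) auto
    finally have Vx: "V x = (\<Sum>y\<in>S. l y * V y)" .
    show "\<exists>F l. finite F \<and> F \<subseteq> N \<and> (\<forall>y\<in>F. 0 \<le> l y) \<and> sum l F = 1
                 \<and> W x = (\<Sum>y\<in>F. l y * W y) \<and> V x = (\<Sum>y\<in>F. l y * V y)"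
      using fS SN l Wx Vx by blast
  qed
  have LW: "neg_inf_lap T \<epsilon> S\<theta> w z = Lp \<epsilon> st W z" for z
    unfolding neg_inf_lap_def S_plus_def S_minus_def Lp_def W_def st_def by simp
  have LV: "neg_inf_lap T \<epsilon> S\<theta> v z = Lp \<epsilon> st V z" for z
    unfolding neg_inf_lap_def S_plus_def S_minus_def Lp_def V_def st_def by simp
  have star': "\<forall>z\<in>NI. Lp \<epsilon> st W z \<le> Lp \<epsilon> st V z" using star unfolding LW LV NI_def .
  have ex: "\<exists>y\<in>N-NI. \<forall>x\<in>N. W x - V x \<le> W y - V y"
    using cases
  proof
    assume c: "\<forall>z\<in>interior_nodes \<Omega> T \<epsilon>.
                   neg_inf_lap T \<epsilon> S\<theta> w z < neg_inf_lap T \<epsilon> S\<theta> v z \<or> neg_inf_lap T \<epsilon> S\<theta> w z < 0"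
    have c': "\<forall>z\<in>NI. Lp \<epsilon> st W z < Lp \<epsilon> st V z \<or> Lp \<epsilon> st W z < 0" using c unfolding LW LV NI_def .
    show ?thesis by (rule core[OF finN neN subN e0 stz rep star' c'])
  next
    assume c: "\<forall>z\<in>interior_nodes \<Omega> T \<epsilon>.
                   neg_inf_lap T \<epsilon> S\<theta> w z < neg_inf_lap T \<epsilon> S\<theta> v z \<or> neg_inf_lap T \<epsilon> S\<theta> v z > 0"
    have c': "\<forall>z\<in>NI. Lp \<epsilon> st W z < Lp \<epsilon> st V z \<or> Lp \<epsilon> st V z > 0" using c unfolding LW LV NI_def .
    have neg: "Lp \<epsilon> st (\<lambda>x. - U x) z = - Lp \<epsilon> st U z" if "z \<in> NI" for z U
      using stz that by (intro Lp_neg) auto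
    have rep2: "\<forall>z\<in>NI. \<forall>x\<in>st z. \<exists>F l. finite F \<and> F \<subseteq> N \<and> (\<forall>y\<in>F. 0 \<le> l y) \<and> sum l F = 1
                 \<and> - V x = (\<Sum>y\<in>F. l y * - V y) \<and> - W x = (\<Sum>y\<in>F. l y * - W y)"
    proof (intro ballI)
      fix z x assume "z \<in> NI" "x \<in> st z"
      then obtain F l where F: "finite F" "F \<subseteq> N" "\<forall>y\<in>F. 0 \<le> l y" "sum l F = 1"
                 "W x = (\<Sum>y\<in>F. l y * W y)" "V x = (\<Sum>y\<in>F. l y * V y)"
        using rep by meson
      have "- V x = (\<Sum>y\<in>F. l y * - V y)" using F(6) by (simp add: sum_negf)
      moreover have "- W x = (\<Sum>y\<in>F. l y * - W y)" using F(5) by (simp add: sum_negf)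
      ultimately show "\<exists>F l. finite F \<and> F \<subseteq> N \<and> (\<forall>y\<in>F. 0 \<le> l y) \<and> sum l F = 1
                 \<and> - V x = (\<Sum>y\<in>F. l y * - V y) \<and> - W x = (\<Sum>y\<in>F. l y * - W y)"
        using F by blast
    qed
    have s2: "\<forall>z\<in>NI. Lp \<epsilon> st (\<lambda>x. - V x) z \<le> Lp \<epsilon> st (\<lambda>x. - W x) z"
      using star' neg by auto
    have c2: "\<forall>z\<in>NI. Lp \<epsilon> st (\<lambda>x. - V x) z < Lp \<epsilon> st (\<lambda>x. - W x) z \<or> Lp \<epsilon> st (\<lambda>x. - V x) z < 0"
      using c' neg by auto
    have "\<exists>y\<in>N-NI. \<forall>x\<in>N. - V x - - W x \<le> - V y - - W y"
      by (rule core[OF finN neN subN e0 stz rep2 s2 c2])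
    thus ?thesis by auto
  qed
  then obtain y where y: "y \<in> N - NI" "\<forall>x\<in>N. W x - V x \<le> W y - V y" by blast
  have yb: "y \<in> boundary_nodes \<Omega> T \<epsilon>" using y unfolding boundary_nodes_def N_def NI_def by auto
  have ge: "w x - v x \<le> w y - v y" if "x \<in> N" for x
    using y that WN by auto
  have bN: "boundary_nodes \<Omega> T \<epsilon> \<subseteq> N" unfolding boundary_nodes_def N_def by auto
  have m1: "Max ((\<lambda>z. w z - v z) ` N) = w y - v y"
    using finN y ge by (intro Max_eqI) auto
  have m2: "Max ((\<lambda>z. w z - v z) ` boundary_nodes \<Omega> T \<epsilon>) = w y - v y"
    using finN bN yb ge by (intro Max_eqI) (auto intro: finite_subset)
  show ?thesis using m1 m2 unfolding N_def by simp
qed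

end
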